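(* Let $G$ be a finite additive group (not necessarily abelian) and let $\mathcal X$ be a Hadamard $(G,K,\lambda)$-PDF. Then $\{{}^2X \mid X\in\mathcal X\}$ is a $(G,2K,4\lambda)$ strong difference family.
   Context: Multisets: the multiset sum $X\uplus Y$ adds multiplicities; ${}^\mu X$ denotes the multiset sum of $\mu$ copies of $X$ (so ${}^2X$ is $X$ with every element taken twice). For a multiset $X=\{x_1,\dots,x_k\}$ on $G$, $\Delta X$ is the multiset of all $x_i-x_j$ over ordered pairs $(i,j)$ of distinct indices; for a collection $\mathcal X$, $\Delta\mathcal X=\biguplus_{X\in\mathcal X}\Delta X$. A $(G,K,\lambda)$-PDF is a collection of subsets of $G$ partitioning $G$, with multiset of block sizes $K$, such that $\Delta\mathcal X={}^\lambda(G\setminus\{0\})$; it is Hadamard if $|G|=2\lambda$. A $(G,K,\mu)$ strong difference family (SDF) is a collection $\mathcal Y$ of multisubsets of $G$ with multiset of sizes $K$ such that $\Delta\mathcal Y={}^\mu G$ (every element of $G$, including $0$, occurs exactly $\mu$ times). For a multiset $K$ of integers, $2K$ is the multiset $\{2k : k\in K\}$. *)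

theory Defs
  imports Main "HOL-Library.Multiset"
begin

text \<open>Difference multiset of a multiset X = {x_1,...,x_k}: all x_i - x_j over
  ordered pairs (i,j) of distinct indices. For each occurrence x we pair it with
  the remaining occurrences X - {x}.\<close>
definition diff_ms :: "'a::group_add multiset \<Rightarrow> 'a multiset" where
  "diff_ms X = (\<Sum>x\<in>#X. \<Sum>y\<in>#(X - {#x#}). {#x - y#})"

definition diff_coll :: "'a::group_add multiset multiset \<Rightarrow> 'a multiset" where
  "diff_coll Y = (\<Sum>X\<in>#Y. diff_ms X)"

definition is_PDF :: "'a::{group_add,finite} set set \<Rightarrow> nat multiset \<Rightarrow> nat \<Rightarrow> bool" where
  "is_PDF XX K lam \<longleftrightarrow>
     \<Union>XX = UNIV \<and> {} \<notin> XX \<and>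
     (\<forall>A\<in>XX. \<forall>B\<in>XX. A \<noteq> B \<longrightarrow> A \<inter> B = {}) \<and>
     image_mset card (mset_set XX) = K \<and>
     diff_coll (image_mset mset_set (mset_set XX)) = repeat_mset lam (mset_set (UNIV - {0}))"

definition is_Hadamard_PDF :: "'a::{group_add,finite} set set \<Rightarrow> nat multiset \<Rightarrow> nat \<Rightarrow> bool" where
  "is_Hadamard_PDF XX K lam \<longleftrightarrow> is_PDF XX K lam \<and> card (UNIV :: 'a set) = 2 * lam"

definition is_SDF :: "'a::{group_add,finite} multiset multiset \<Rightarrow> nat multiset \<Rightarrow> nat \<Rightarrow> bool" where
  "is_SDF YY K mu \<longleftrightarrow>
     image_mset size YY = K \<and> diff_coll YY = repeat_mset mu (mset_set (UNIV :: 'a set))"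

end

theory Submission
  imports Defs
begin

lemma sum_remove1:
  assumes "x \<in># M"
  shows "(\<Sum>y\<in>#M. f y) = f x + (\<Sum>y\<in>#(M - {#x#}). f y)"
proof -
  have "M = add_mset x (M - {#x#})" using assms by simp
  then show ?thesis by (metis sum_mset.insert)
qed

lemma sum_const_zero_ms: "(\<Sum>x\<in>#M. {#c#}) = repeat_mset (size M) {#c#}"
  by (induction M) auto

lemma diff_ms_double:
  fixes M :: "'a::group_add multiset"
  shows "diff_ms (M + M) = repeat_mset (2 * size M) {#0#} + repeat_mset 4 (diff_ms M)"
proof -
  have inner: "(\<Sum>y\<in>#(M + M - {#x#}). {#x - y#}) =
      {#0#} + dp + dp" if "x \<in># M"
      and "dp = (\<Sum>y\<in>#(M - {#x#}). {#x - y#})" for x dp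
  proof -
    have "M + M - {#x#} = M + (M - {#x#})" using that(1) by (intro multiset_diff_union_assoc) simp
    then have "(\<Sum>y\<in>#(M + M - {#x#}). {#x - y#}) = (\<Sum>y\<in>#M. {#x - y#}) + dp"
      using that(2) by simp
    also have "(\<Sum>y\<in>#M. {#x - y#}) = {#x - x#} + dp"
      using sum_remove1[OF that(1), of "\<lambda>y. {#x - y#}"] that(2) by simp
    finally show ?thesis by simp
  qed
  let ?g = "\<lambda>x. {#0#} + (\<Sum>y\<in>#(M - {#x#}). {#x - y#}) + (\<Sum>y\<in>#(M - {#x#}). {#x - y#})"
  have "diff_ms (M + M) = (\<Sum>x\<in>#M + M. ?g x)"
    unfolding diff_ms_def
    by (rule arg_cong[where f=sum_mset], rule image_mset_cong, rule inner) auto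
  also have "\<dots> = (\<Sum>x\<in>#M. ?g x) + (\<Sum>x\<in>#M. ?g x)"
    by simp
  also have "(\<Sum>x\<in>#M. ?g x) = (\<Sum>x\<in>#M. {#0#}) + diff_ms M + diff_ms M"
    by (simp only: diff_ms_def sum_mset.distrib)
  also have "(\<Sum>x\<in>#M. {#0#}) = repeat_mset (size M) {#0#}"
    by (rule sum_const_zero_ms)
  finally show ?thesis by (simp add: multiset_eq_iff)
qed

lemma sum_repeat1: "(\<Sum>x\<in>#A. repeat_mset (g x) B) = repeat_mset (\<Sum>x\<in>#A. g x) B"
  by (induction A) (auto simp: repeat_mset_distrib)

lemma sum_replicate1: "(\<Sum>x\<in>#A. replicate_mset (g x) c) = replicate_mset (\<Sum>x\<in>#A. g x) c"
  by (induction A) (auto simp: multiset_eq_iff)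

lemma sum_repeat2: "(\<Sum>x\<in>#A. repeat_mset n (h x)) = repeat_mset n (\<Sum>x\<in>#A. h x)"
  by (induction A) auto

theorem proposition2p2:
  fixes XX :: "'a::{group_add,finite} set set" and K :: "nat multiset" and lam :: nat
  assumes "is_Hadamard_PDF XX K lam"
  shows "is_SDF (image_mset (\<lambda>X. repeat_mset 2 (mset_set X)) (mset_set XX))
                (image_mset (\<lambda>k. 2 * k) K) (4 * lam)"
proof -
  have U: "\<Union>XX = UNIV" and disj: "\<forall>A\<in>XX. \<forall>B\<in>XX. A \<noteq> B \<longrightarrow> A \<inter> B = {}"
    and Kd: "image_mset card (mset_set XX) = K"
    and D: "diff_coll (image_mset mset_set (mset_set XX)) = repeat_mset lam (mset_set (UNIV - {0}))"
    and C: "card (UNIV :: 'a set) = 2 * lam"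
    using assms unfolding is_Hadamard_PDF_def is_PDF_def by auto
  have sz: "image_mset size (image_mset (\<lambda>X. repeat_mset 2 (mset_set X)) (mset_set XX))
      = image_mset (\<lambda>k. 2 * k) K"
    unfolding Kd[symmetric] by (simp add: multiset.map_comp o_def)
  have sc: "(\<Sum>X\<in>#mset_set XX. card X) = card (UNIV :: 'a set)"
  proof -
    have "(\<Sum>X\<in>#mset_set XX. card X) = sum card XX"
      by (simp add: sum_unfold_sum_mset)
    also have "\<dots> = card (\<Union>XX)"
      by (rule card_Union_disjoint[symmetric]) (auto simp: pairwise_def disjnt_def disj)
    finally show ?thesis using U by simp
  qed
  have "diff_coll (image_mset (\<lambda>X. repeat_mset 2 (mset_set X)) (mset_set XX))
     = (\<Sum>X\<in>#mset_set XX. repeat_mset (2 * card X) {#0#} + repeat_mset 4 (diff_ms (mset_set X)))"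
    unfolding diff_coll_def
    by (simp add: multiset.map_comp o_def numeral_2_eq_2 diff_ms_double[simplified numeral_2_eq_2])
  also have "\<dots> = repeat_mset (\<Sum>X\<in>#mset_set XX. 2 * card X) {#0#}
      + repeat_mset 4 (diff_coll (image_mset mset_set (mset_set XX)))"
    by (simp add: sum_mset.distrib sum_repeat1 sum_replicate1 sum_repeat2 diff_coll_def multiset.map_comp o_def)
  also have "(\<Sum>X\<in>#mset_set XX. 2 * card X) = 2 * card (UNIV :: 'a set)"
    using sc by (simp add: sum_mset_distrib_left[symmetric])
  finally have dd: "diff_coll (image_mset (\<lambda>X. repeat_mset 2 (mset_set X)) (mset_set XX))
      = repeat_mset (4 * lam) {#0#} + repeat_mset 4 (repeat_mset lam (mset_set (UNIV - {0})))"
    using C D by simp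
  have "diff_coll (image_mset (\<lambda>X. repeat_mset 2 (mset_set X)) (mset_set XX))
      = repeat_mset (4 * lam) (mset_set (UNIV :: 'a set))"
    unfolding dd by (simp add: multiset_eq_iff count_mset_set)
  with sz show ?thesis unfolding is_SDF_def by simp
qed

end
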